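(* Let $\mathbf A=(\mathbf a_1,\ldots,\mathbf a_m)^\top\in\mathbb R^{m\times d}$ and $\mathbf b\in\mathbb R^m$. If $m\le 2d-1$, then $(\mathbf A,\mathbf b)$ is not affine phase retrievable for $\mathbb R^d$.
   Context: $(\mathbf A,\mathbf b)$ is called affine phase retrievable for $\mathbb R^d$ if the map $\mathbf x\mapsto(|\langle\mathbf a_1,\mathbf x\rangle+b_1|,\ldots,|\langle\mathbf a_m,\mathbf x\rangle+b_m|)$ is injective on $\mathbb R^d$, where $\mathbf b=(b_1,\ldots,b_m)^\top$. *)

theory Defs
  imports "HOL-Analysis.Analysis"
begin

definition affine_phase_retrievable :: "real^'d^'m \<Rightarrow> real^'m \<Rightarrow> bool" where
  "affine_phase_retrievable A b \<longleftrightarrow>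
     inj (\<lambda>x::real^'d. \<chi> i. \<bar>(A $ i) \<bullet> x + b $ i\<bar>)"

end

theory Submission
  imports Defs
begin

lemma key:
  fixes A :: "real^'d^'m" and b :: "real^'m"
  assumes "CARD('m) \<le> 2 * CARD('d) - 1"
  shows "\<exists>u v T. u \<noteq> 0 \<and> (\<forall>i\<in>T. A$i \<bullet> v + b$i = 0) \<and> (\<forall>i. i \<notin> T \<longrightarrow> A$i \<bullet> u = 0)"
proof (cases "span (range (\<lambda>i. A$i)) = UNIV")
  case False
  have "dim (range (\<lambda>i. A$i)) < DIM(real^'d)"
  proof -
    have "dim (range (\<lambda>i. A$i)) \<noteq> DIM(real^'d)" using False dim_eq_full by blast
    moreover have "dim (range (\<lambda>i. A$i)) \<le> DIM(real^'d)" by (rule dim_subset_UNIV)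
    ultimately show ?thesis by simp
  qed
  then obtain u :: "real^'d" where u: "u \<noteq> 0" "\<And>y. y \<in> span (range (\<lambda>i. A$i)) \<Longrightarrow> orthogonal u y"
    by (rule orthogonal_to_subspace_exists) blast
  have "\<forall>i. A$i \<bullet> u = 0"
    proof (intro allI) fix i have "orthogonal u (A$i)" by (rule u(2)) (simp add: span_base) then show "A$i \<bullet> u = 0" by (simp add: orthogonal_def inner_commute) qed
  then show ?thesis using u(1) by blast
next
  case True
  obtain B where B: "B \<subseteq> range (\<lambda>i. A$i)" "independent B" "range (\<lambda>i. A$i) \<subseteq> span B"
    "card B = dim (range (\<lambda>i. A$i))"
    by (rule basis_exists)
  have spanB: "span B = UNIV"
    proof - have "span (range (\<lambda>i. A$i)) \<subseteq> span (span B)" using B(3) by (rule span_mono) then show ?thesis using True by (simp add: span_span top.extremum_unique) qed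
  have dimr: "dim (range (\<lambda>i. A$i)) = CARD('d)"
    proof - have "dim (range (\<lambda>i. A$i)) = dim (span (range (\<lambda>i. A$i)))" by simp also have "\<dots> = DIM(real^'d)" using True by simp finally show ?thesis by simp qed
  have finB: "finite B" using B(2) by (simp add: independent_imp_finite)
  have cB: "card B = CARD('d)" using B(4) dimr by simp
  obtain g where g: "bij_betw g (UNIV::'d set) B"
    using finite_same_card_bij[of "UNIV::'d set" B] cB finB by auto
  define h where "h w = (SOME i. A$i = w)" for w
  have hA: "A$(h w) = w" if wB: "w \<in> B" for w
    proof - obtain i where "A$i = w" using B(1) wB by blast then show ?thesis unfolding h_def by (rule someI) qed
  define T where "T = h ` B"
  have injh: "inj_on h B" by (rule inj_onI) (metis hA)
  have cT: "card T = CARD('d)" unfolding T_def using card_image[OF injh] cB by simp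
  have cS: "card (- T) < CARD('d)"
  proof -
    have "card (- T) = CARD('m) - card T"
      by (simp add: Compl_eq_Diff_UNIV card_Diff_subset)
    moreover have "CARD('d) > 0" by simp
    ultimately show ?thesis using assms cT by linarith
  qed
  have "dim ((\<lambda>i. A$i) ` (- T)) < DIM(real^'d)"
    using dim_le_card[of "(\<lambda>i. A$i) ` (- T)" "(\<lambda>i. A$i) ` (- T)"] card_image_le[of "- T" "\<lambda>i. A$i"] cS
    by (simp add: span_superset)
  then obtain u :: "real^'d" where u: "u \<noteq> 0" "\<And>y. y \<in> span ((\<lambda>i. A$i) ` (- T)) \<Longrightarrow> orthogonal u y"
    by (rule orthogonal_to_subspace_exists) blast
  have uS: "\<forall>i. i \<notin> T \<longrightarrow> A$i \<bullet> u = 0"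
    proof (intro allI impI) fix i assume "i \<notin> T" then have "orthogonal u (A$i)" by (intro u(2) span_base) auto then show "A$i \<bullet> u = 0" by (simp add: orthogonal_def inner_commute) qed
  define f where "f v = (\<chi> j. g j \<bullet> v)" for v :: "real^'d"
  have lf: "linear f"
    unfolding f_def by (rule linearI) (simp_all add: vec_eq_iff inner_add_right)
  have inj: "inj f"
  proof (subst linear_inj_iff_eq_0[OF lf], intro allI impI)
    fix v assume "f v = 0"
    then have "\<forall>j. g j \<bullet> v = 0" by (simp add: f_def vec_eq_iff)
    have "\<forall>w\<in>B. orthogonal v w"
      proof fix w assume "w \<in> B" then obtain j where "w = g j" using g unfolding bij_betw_def by blast then show "orthogonal v w" using \<open>\<forall>j. g j \<bullet> v = 0\<close> by (simp add: orthogonal_def inner_commute) qed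
    then have "orthogonal v v" using spanB by (intro orthogonal_to_span[of v B v]) auto
    then show "v = 0" by (simp add: orthogonal_def)
  qed
  have "surj f"
    by (rule linear_injective_imp_surjective[OF lf inj]) simp
  then obtain v where v: "f v = (\<chi> j. - b $ h (g j))" by (metis surjD)
  have vT: "\<forall>i\<in>T. A$i \<bullet> v + b$i = 0"
  proof
    fix i assume "i \<in> T"
    then obtain w where w: "w \<in> B" "i = h w" unfolding T_def by blast
    then obtain j where j: "w = g j" using g unfolding bij_betw_def by blast
    have "g j \<bullet> v = - b $ h (g j)" using v unfolding f_def vec_eq_iff by simp
    then show "A$i \<bullet> v + b$i = 0" using hA w j by simp
  qed
  show ?thesis using u(1) vT uS by blast
qed

theorem theorem2p2:
  fixes A :: "real^'d^'m" and b :: "real^'m"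
  assumes "CARD('m) \<le> 2 * CARD('d) - 1"
  shows "\<not> affine_phase_retrievable A b"
proof
  obtain u v T where u: "u \<noteq> 0" and vT: "\<forall>i\<in>T. A$i \<bullet> v + b$i = 0"
    and uS: "\<forall>i. i \<notin> T \<longrightarrow> A$i \<bullet> u = 0"
    using key[OF assms, of A b] by blast
  assume "affine_phase_retrievable A b"
  then have inj: "inj (\<lambda>x::real^'d. \<chi> i. \<bar>(A $ i) \<bullet> x + b $ i\<bar>)"
    by (simp add: affine_phase_retrievable_def)
  have "(\<chi> i. \<bar>(A $ i) \<bullet> (v + u) + b $ i\<bar>) = (\<chi> i. \<bar>(A $ i) \<bullet> (v - u) + b $ i\<bar>)"
  proof (subst vec_eq_iff, intro allI)
    fix i
    show "(\<chi> i. \<bar>(A $ i) \<bullet> (v + u) + b $ i\<bar>) $ i = (\<chi> i. \<bar>(A $ i) \<bullet> (v - u) + b $ i\<bar>) $ i"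
    proof (cases "i \<in> T")
      case True
      then have "A$i \<bullet> v + b$i = 0" using vT by blast
      then show ?thesis by (simp add: inner_add_right inner_diff_right)
    next
      case False
      then show ?thesis using uS by (simp add: inner_add_right inner_diff_right)
    qed
  qed
  then have "v + u = v - u" using inj by (meson injD)
  then have "\<forall>i. u$i = 0" by (auto simp: vec_eq_iff)
  then show False using u by (simp add: vec_eq_iff)
qed

end
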